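(* Let $r,s\in\mathbb C^\times$ with $r^j=s$ for some integer $j\ge0$, and let $C\in\mathbb C^\times$. Let $f(x,y)=\sum_{i=0}^b g_i(x)y^i\in\mathbb C[x,y]$ be a polynomial of degree $(a,b)$ such that $\deg g_i<o(r)$ for $0\le i\le b$. If $f(rx,\ sCx^j+sy)=r^as^bf(x,y)$, then $f(x,y)$ is a constant multiple of $x^a$.
   Context: The monomial $x^iy^k$ has degree $(i,k)$; degrees are ordered by $(i,k)>(i',k')$ iff $k>k'$, or $k=k'$ and $i>i'$; the degree of a nonzero polynomial is the largest degree of its monomials (so $b$ is the $y$-degree and $a=\deg g_b$). $o(r)$ is the multiplicative order of $r$ ($\infty$ if $r$ is not a root of unity). *)

theory Defs
  imports "HOL-Computational_Algebra.Polynomial" "HOL-Library.Extended_Nat"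
begin

definition mult_order :: "complex \<Rightarrow> enat" where
  "mult_order r = (if \<exists>n>0. r ^ n = 1 then enat (LEAST n. n > 0 \<and> r ^ n = 1) else \<infinity>)"

text \<open>Bivariate polynomials f(x,y) = sum_i g_i(x) y^i are represented as
  complex poly poly: outer variable y, coefficients g_i in C[x].\<close>

text \<open>The substitution f(x,y) |-> f(r x, s C x^j + s y).\<close>
definition subst_map :: "complex \<Rightarrow> complex \<Rightarrow> complex \<Rightarrow> nat \<Rightarrow> complex poly poly \<Rightarrow> complex poly poly" where
  "subst_map r s C j f =
     pcompose (map_poly (\<lambda>g. pcompose g [:0, r:]) f) [: monom (s * C) j, [:s:] :]"

end

theory Submission imports Defs begin

lemma coeff_pcomp_scale: "coeff (p \<circ>\<^sub>p [:0, r:]) k = r ^ k * coeff p k"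
  for p :: "'a::comm_ring_1 poly"
proof (induction p arbitrary: k)
  case 0 then show ?case by simp
next
  case (pCons a p)
  show ?case by (cases k) (simp_all add: pcompose_pCons pCons.IH)
qed

lemma coeff_pcomp_lin_top:
  fixes p :: "'a::comm_ring_1 poly"
  shows "degree p \<le> n \<Longrightarrow> coeff (p \<circ>\<^sub>p [:A, B:]) n = coeff p n * B ^ n"
proof (induction p arbitrary: n)
  case 0 then show ?case by simp
next
  case (pCons a p)
  show ?case
  proof (cases n)
    case 0
    with pCons have "p = 0" by (cases "p = 0") auto
    then show ?thesis using 0 by (simp add: pcompose_pCons)
  next
    case (Suc m)
    have dp: "degree p \<le> m" using pCons.prems Suc by (cases "p = 0") auto
    have "degree (p \<circ>\<^sub>p [:A, B:]) \<le> m"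
    proof -
      have d1: "degree [:A, B:] \<le> 1" by simp
      have "degree (p \<circ>\<^sub>p [:A, B:]) \<le> degree p * degree [:A, B:]" by (rule degree_pcompose_le)
      also have "\<dots> \<le> degree p * 1" using d1 by (rule mult_le_mono2)
      finally show ?thesis using dp by simp
    qed
    then have z: "coeff (p \<circ>\<^sub>p [:A, B:]) (Suc m) = 0" by (simp add: coeff_eq_0)
    show ?thesis using Suc by (simp add: pcompose_pCons pCons.IH[OF dp] z)
  qed
qed

lemma coeff_pcomp_lin_next:
  fixes p :: "'a::comm_ring_1 poly"
  shows "degree p \<le> Suc n \<Longrightarrow> coeff (p \<circ>\<^sub>p [:A, B:]) n
     = coeff p n * B ^ n + of_nat (Suc n) * coeff p (Suc n) * A * B ^ n"
proof (induction p arbitrary: n)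
  case 0 then show ?case by simp
next
  case (pCons a p)
  have dp: "degree p \<le> n" using pCons.prems by (cases "p = 0") auto
  show ?case
  proof (cases n)
    case 0
    have "coeff (p \<circ>\<^sub>p [:A, B:]) 0 = coeff p 0"
      using coeff_pcomp_lin_top[of p 0 A B] dp 0 by simp
    then show ?thesis using 0 by (simp add: pcompose_pCons)
  next
    case (Suc m)
    have t: "coeff (p \<circ>\<^sub>p [:A, B:]) (Suc m) = coeff p (Suc m) * B ^ Suc m"
      using coeff_pcomp_lin_top[of p "Suc m" A B] dp Suc by simp
    have i: "coeff (p \<circ>\<^sub>p [:A, B:]) m = coeff p m * B ^ m + of_nat (Suc m) * coeff p (Suc m) * A * B ^ m"
      using pCons.IH[of m] dp Suc by simp
    show ?thesis using Suc by (simp add: pcompose_pCons t i algebra_simps)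
  qed
qed

lemma const_pow: "[:c:] ^ n = [:c ^ n:]"
  by (induction n) (simp_all add: one_pCons mult.commute)

lemma coeff_mult_const: "coeff (p * [:c:]) k = coeff p k * c"
  for p :: "'a::comm_ring_1 poly"
  by (simp add: mult.commute)

theorem mainTheorem17:
  fixes r s C :: complex and j :: nat and f :: "complex poly poly"
  assumes "r \<noteq> 0" and "s \<noteq> 0" and "C \<noteq> 0" and "r ^ j = s"
    and "f \<noteq> 0"
    and "\<forall>i \<le> degree f. enat (degree (coeff f i)) < mult_order r"
    and "subst_map r s C j f
           = smult [: r ^ degree (lead_coeff f) * s ^ degree f :] f"
  shows "\<exists>c :: complex. f = [: monom c (degree (lead_coeff f)) :]"
proof -
  define b where "b = degree f"
  define gb where "gb = lead_coeff f"
  define a where "a = degree gb"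
  define K where "K = r ^ a * s ^ b"
  define F where "F = map_poly (\<lambda>g. g \<circ>\<^sub>p [:0, r:]) f"
  define A where "A = monom (s * C) j"
  define B where "B = [:s:]"
  have cF: "coeff F i = coeff f i \<circ>\<^sub>p [:0, r:]" for i
    unfolding F_def by (simp add: coeff_map_poly)
  have dF: "degree F \<le> b" by (rule degree_le) (simp add: cF b_def coeff_eq_0)
  have E: "F \<circ>\<^sub>p [:A, B:] = smult [:K:] f"
    using assms(7) unfolding subst_map_def F_def A_def B_def K_def a_def gb_def b_def by simp
  have gb0: "gb \<noteq> 0" using assms(5) gb_def by simp
  have top: "coeff (F \<circ>\<^sub>p [:A, B:]) b = coeff F b * B ^ b"
    using coeff_pcomp_lin_top[OF dF] .
  have topk: "s ^ b * r ^ k * coeff gb k = K * coeff gb k" for k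
  proof -
    have "coeff (coeff F b * B ^ b) k = coeff ([:K:] * gb) k"
      using top E by (simp add: gb_def b_def)
    then show ?thesis by (simp add: cF B_def const_pow coeff_mult_const coeff_pcomp_scale gb_def b_def mult.commute)
  qed
  have aord: "enat a < mult_order r" using assms(6) by (simp add: a_def gb_def b_def)
  have only_a: "coeff gb k = 0" if "k \<noteq> a" for k
  proof (rule ccontr)
    assume nz: "coeff gb k \<noteq> 0"
    then have ka: "k \<le> a" unfolding a_def by (rule le_degree)
    with that have pos: "a - k > 0" by simp
    have "s ^ b * r ^ k = K" using topk[of k] nz by simp
    also have "K = s ^ b * r ^ k * r ^ (a - k)"
      unfolding K_def using ka by (simp add: power_add[symmetric])
    finally have r1: "r ^ (a - k) = 1" using assms(1,2) by simp
    then have ex: "\<exists>n>0. r ^ n = 1" using pos by blast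
    have "(LEAST n. n > 0 \<and> r ^ n = 1) \<le> a - k" using pos r1 by (intro Least_le) simp
    then have "mult_order r \<le> enat (a - k)" using ex unfolding mult_order_def by simp
    with aord have "enat a < enat (a - k)" by (meson le_less_trans not_le)
    then show False by simp
  qed
  define c where "c = coeff gb a"
  have gbm: "gb = monom c a"
    by (rule poly_eqI) (auto simp: coeff_monom c_def only_a)
  have c0: "c \<noteq> 0" using gb0 gbm by auto
  show ?thesis
  proof (cases b)
    case 0
    then have "f = [:coeff f 0:]" using b_def by (metis degree_0_id)
    then show ?thesis using 0 gbm b_def gb_def a_def by metis
  next
    case (Suc n)
    define d where "d = coeff f n"
    have dF': "degree F \<le> Suc n" using dF Suc by simp
    have nx: "coeff (F \<circ>\<^sub>p [:A, B:]) n = coeff F n * B ^ n + of_nat (Suc n) * coeff F (Suc n) * A * B ^ n"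
      using coeff_pcomp_lin_next[OF dF'] .
    have gbr: "gb \<circ>\<^sub>p [:0, r:] = monom (c * r ^ a) a"
      by (rule poly_eqI) (simp add: coeff_pcomp_scale gbm coeff_monom)
    have t2: "of_nat (Suc n) * coeff F (Suc n) * A * B ^ n = monom (of_nat (Suc n) * (c * r ^ a) * (s * C) * s ^ n) (a + j)"
    proof -
      have f1: "coeff F (Suc n) = monom (c * r ^ a) a" using Suc b_def gb_def cF gbr by simp
      have f2: "B ^ n = monom (s ^ n) 0" by (simp add: B_def const_pow monom_0)
      have f3: "(of_nat (Suc n) :: complex poly) = monom (of_nat (Suc n)) 0" by (simp add: of_nat_poly monom_0)
      show ?thesis unfolding f1 f2 f3 A_def mult_monom by simp
    qed
    have "coeff (coeff F n * B ^ n + of_nat (Suc n) * coeff F (Suc n) * A * B ^ n) (a + j) = coeff ([:K:] * d) (a + j)"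
      using nx E d_def by simp
    then have "s ^ n * r ^ (a + j) * coeff d (a + j) + of_nat (Suc n) * (c * r ^ a) * (s * C) * s ^ n = K * coeff d (a + j)"
      unfolding t2 by (simp add: cF B_def const_pow coeff_mult_const coeff_pcomp_scale d_def mult_ac)
    moreover have "K = s ^ n * r ^ (a + j)"
      unfolding K_def using Suc assms(4) by (simp add: power_add)
    ultimately have "of_nat (Suc n) * (c * r ^ a) * (s * C) * s ^ n = 0" by simp
    moreover have "(of_nat (Suc n) :: complex) \<noteq> 0" by (rule of_nat_neq_0)
    ultimately have False using c0 assms(1,2,3) by (simp del: of_nat_Suc)
    then show ?thesis ..
  qed
qed

end
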